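(* The set $\mathcal A_1$ with the operation $\circ$ is a non-Abelian semigroup. That is: (i) if $\mathbf a,\mathbf b\in\mathcal A_1$, then $\mathbf a\circ\mathbf b\in\mathcal A_1$; (ii) for all $\mathbf a,\mathbf b,\mathbf c\in\mathcal A_1$, $(\mathbf a\circ\mathbf b)\circ\mathbf c=\mathbf a\circ(\mathbf b\circ\mathbf c)$; and the operation is not commutative.
   Context: Binary words are ordered lexicographically, with $\mathbf c\prec\mathbf d$ iff $\mathbf c0^\infty\prec\mathbf d0^\infty$. Word operations. For a binary word $c_1\dots c_k$: - if $c_k=0$, then $c_1\dots c_k^+=c_1\dots c_{k-1}1$; - the reflection is $\overline{c_1\dots c_k}=(1-c_1)\dots(1-c_k)$. Fundamental words. A binary word $a_1\dots a_m$ with $m\ge2$ is fundamental if $\overline{a_1\dots a_{m-i}}\preceq a_{i+1}\dots a_m\prec a_1\dots a_{m-i}$ for all $1\le i<m$. $\mathcal A_1$ is the set of such words; they all begin with $1$. The graph. For $\mathbf a\in\mathcal A_1$, let $G$ have vertices Start, $A$, $B$ and edges - $e_0$: Start$\to A$, - $e_1$: $A\to B$, - $e_2$: $B\to B$, - $e_3$: $B\to A$, - $e_4$: $A\to A$. It carries two labelings: - $\mathcal L_{\mathbf a}$: $e_0,e_3\mapsto\mathbf a^+$; $e_1\mapsto\overline{\mathbf a^+}$; $e_2\mapsto\mathbf a$; $e_4\mapsto\overline{\mathbf a}$; - $\mathcal L^*$: $e_0,e_3,e_4\mapsto1$; $e_1,e_2\mapsto0$. The map $\Phi_{\mathbf a}$.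 For a path $e_{i_1}\dots e_{i_k}$ with $i_1=0$, set $\Phi_{\mathbf a}(\mathcal L_{\mathbf a}(e_{i_1})\cdots\mathcal L_{\mathbf a}(e_{i_k}))=\mathcal L^*(e_{i_1}\dots e_{i_k})$. This is a bijection from such block words onto binary words beginning with $1$. Composition. $\mathbf a\circ\mathbf b:=\Phi_{\mathbf a}^{-1}(\mathbf b)$, a word of length $|\mathbf a||\mathbf b|$. For example, $10\circ110=110100$ while $110\circ10=111000$. *)

theory Defs
  imports Main
begin

text \<open>Binary words are lists of booleans; True stands for the letter 1, False for 0.\<close>

type_synonym word = "bool list"

definition pad :: "word \<Rightarrow> nat \<Rightarrow> bool" where
  "pad c n = (if n < length c then c ! n else False)"

definition word_less :: "word \<Rightarrow> word \<Rightarrow> bool" where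
  "word_less c d \<longleftrightarrow> (\<exists>k. (\<forall>i<k. pad c i = pad d i) \<and> \<not> pad c k \<and> pad d k)"

definition word_le :: "word \<Rightarrow> word \<Rightarrow> bool" where
  "word_le c d \<longleftrightarrow> word_less c d \<or> pad c = pad d"

definition refl_word :: "word \<Rightarrow> word" where
  "refl_word c = map Not c"

text \<open>The operation c^+ (replace the last letter 0 by 1); only applied to words ending in 0.\<close>
definition plus_word :: "word \<Rightarrow> word" where
  "plus_word c = butlast c @ [True]"

definition fundamental :: "word \<Rightarrow> bool" where
  "fundamental a \<longleftrightarrow> length a \<ge> 2 \<and>
     (\<forall>i. 1 \<le> i \<and> i < length a \<longrightarrow>
        word_le (refl_word (take (length a - i) a)) (drop i a) \<and>
        word_less (drop i a) (take (length a - i) a))"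

definition A1 :: "word set" where
  "A1 = {a. fundamental a}"

datatype vertex = VA | VB

text \<open>Following the path in G determined by the L*-labels (after the initial edge e0),
  and concatenating the L_a-labels of its edges:
  from A: letter 1 = e4 (A\<rightarrow>A, label refl a), letter 0 = e1 (A\<rightarrow>B, label refl a^+);
  from B: letter 0 = e2 (B\<rightarrow>B, label a), letter 1 = e3 (B\<rightarrow>A, label a^+).\<close>
fun phi_inv_from :: "word \<Rightarrow> vertex \<Rightarrow> word \<Rightarrow> word" where
  "phi_inv_from a v [] = []"
| "phi_inv_from a VA (x # xs) =
     (if x then refl_word a @ phi_inv_from a VA xs
      else refl_word (plus_word a) @ phi_inv_from a VB xs)"
| "phi_inv_from a VB (x # xs) =
     (if x then plus_word a @ phi_inv_from a VA xs
      else a @ phi_inv_from a VB xs)"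

text \<open>a \<circ> b = \<Phi>_a^{-1}(b), for b beginning with 1 (the first letter 1 is the edge e0,
  labelled a^+, leading to A).\<close>
definition compose :: "word \<Rightarrow> word \<Rightarrow> word" where
  "compose a b = plus_word a @ phi_inv_from a VA (tl b)"

lemma "compose [True, False] [True, True, False] = [True,True,False,True,False,False]"
  by (simp add: compose_def plus_word_def refl_word_def)
lemma "compose [True, True, False] [True, False] = [True,True,True,False,False,False]"
  by (simp add: compose_def plus_word_def refl_word_def)

end

theory Submission imports Defs begin

definition ext :: "word \<Rightarrow> nat \<Rightarrow> bool" where
  "ext a j = a ! ((j + length a - 1) mod length a)"

definition good :: "word \<Rightarrow> bool" where
  "good a \<longleftrightarrow> a \<noteq> [] \<and> a ! 0 \<and> \<not> a ! (length a - 1)"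

lemma length_plus_word[simp]: "a \<noteq> [] \<Longrightarrow> length (plus_word a) = length a"
  by (simp add: plus_word_def)

lemma nth_plus_word: "a \<noteq> [] \<Longrightarrow> t < length a \<Longrightarrow>
   plus_word a ! t = (if t = length a - 1 then True else a ! t)"
  by (auto simp: plus_word_def nth_append nth_butlast)

lemma length_phi: "a \<noteq> [] \<Longrightarrow> length (phi_inv_from a v xs) = length a * length xs"
proof (induction xs arbitrary: v)
  case Nil then show ?case by simp
next
  case (Cons x xs) then show ?case by (cases v) (auto simp: refl_word_def)
qed

lemma nth_phi:
  assumes "a \<noteq> []" "\<not> a ! (length a - 1)"
  shows "t < length a * length xs \<Longrightarrow> phi_inv_from a v xs ! t =
     (a ! (t mod length a) \<noteq> (if (t+1) div length a = 0 then v = VA else xs ! ((t+1) div length a - 1)))"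
proof (induction xs arbitrary: v t)
  case Nil then show ?case by simp
next
  case (Cons x xs)
  let ?m = "length a"
  have m: "?m > 0" using assms by simp
  show ?case
  proof (cases "t < ?m")
    case True
    show ?thesis
    proof (cases "t = ?m - 1")
      case True
      have d: "Suc t div ?m = 1" "t mod ?m = ?m - 1" using True m by auto
      show ?thesis using True assms d by (cases v; cases x) (auto simp: nth_append refl_word_def nth_plus_word)
    next
      case False
      have d: "Suc t div ?m = 0" "t mod ?m = t" using False \<open>t < ?m\<close> m by auto
      show ?thesis using False \<open>t < ?m\<close> assms d by (cases v; cases x) (auto simp: nth_append refl_word_def nth_plus_word)
    qed
  next
    case False
    have l: "length (if x then refl_word a else refl_word (plus_word a)) = ?m"
      "length (if x then plus_word a else a) = ?m" using assms by (auto simp: refl_word_def)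
    have t': "t - ?m < ?m * length xs" using False Cons.prems by simp
    have e1: "(t - ?m) mod ?m = t mod ?m" using False by (simp add: mod_if)
    have e2: "Suc (t - ?m) div ?m = Suc t div ?m - 1"
    proof -
      have "Suc t = Suc (t - ?m) + ?m" using False by simp
      then have "Suc t div ?m = Suc (t - ?m) div ?m + 1" using m by (metis div_add_self2 less_not_refl2)
      then show ?thesis by simp
    qed
    have e3: "Suc t div ?m \<ge> 1" using False m by (simp add: le_div_geq)
    define v' where "v' = (if x then VA else VB)"
    have split: "phi_inv_from a v (x # xs) = (if v = VA then (if x then refl_word a else refl_word (plus_word a))
         else (if x then plus_word a else a)) @ phi_inv_from a v' xs"
      by (cases v) (auto simp: v'_def)
    have lb: "length (if v = VA then (if x then refl_word a else refl_word (plus_word a))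
         else (if x then plus_word a else a)) = ?m" using assms by (auto simp: refl_word_def)
    have "phi_inv_from a v (x # xs) ! t = phi_inv_from a v' xs ! (t - ?m)"
      unfolding split using lb False by (simp add: nth_append)
    also have "\<dots> = (a ! (t mod ?m) \<noteq> (if Suc t div ?m - 1 = 0 then v' = VA else xs ! (Suc t div ?m - 1 - 1)))"
      using Cons.IH[OF t'] e1 e2 by simp
    also have "\<dots> = (a ! (t mod ?m) \<noteq> (if (t+1) div ?m = 0 then v = VA else (x#xs) ! ((t+1) div ?m - 1)))"
      using e3 by (cases "Suc t div ?m - 1") (auto simp: v'_def)
    finally show ?thesis .
  qed
qed
lemma good_len: "good a \<Longrightarrow> length a \<ge> 2"
  unfolding good_def by (cases a; cases "tl a") auto

lemma compose_phi: "b \<noteq> [] \<Longrightarrow> b ! 0 \<Longrightarrow> compose a b = phi_inv_from a VB b"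
  by (cases b) (auto simp: compose_def)

lemma length_compose: "a \<noteq> [] \<Longrightarrow> b \<noteq> [] \<Longrightarrow> b ! 0 \<Longrightarrow> length (compose a b) = length a * length b"
  by (simp add: compose_phi length_phi)

lemma ext_nth: "1 \<le> t \<Longrightarrow> t \<le> length w \<Longrightarrow> ext w t = w ! (t - 1)"
  unfolding ext_def by (simp add: mod_if)

lemma ext_period: "ext w (t + k * length w) = ext w t"
proof -
  have "(t + k * length w + length w - 1) mod length w = (t + length w - 1 + k * length w) mod length w"
  proof (cases "length w = 0")
    case False
    then have "t + k * length w + length w - 1 = t + length w - 1 + k * length w" by linarith
    then show ?thesis by simp
  qed simp
  also have "\<dots> = (t + length w - 1) mod length w" by simp
  finally show ?thesis unfolding ext_def by simp
qed

lemma ext_0: "ext w 0 = w ! (length w - 1)"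
  unfolding ext_def by (cases "length w") auto

lemma ext_compose_aux:
  assumes "good a" "good b" "1 \<le> t" "t \<le> length a * length b"
  shows "ext (compose a b) t = (ext a t \<noteq> ext b (t div length a))"
proof -
  let ?m = "length a" and ?n = "length b"
  have m: "?m \<ge> 2" "?n \<ge> 2" using good_len assms by auto
  have ne: "a \<noteq> []" "b \<noteq> []" "b ! 0" "\<not> a ! (?m - 1)" "\<not> b ! (?n - 1)" using assms unfolding good_def by auto
  have "ext (compose a b) t = compose a b ! (t - 1)"
    using assms ne by (simp add: ext_nth length_compose)
  also have "\<dots> = (a ! ((t-1) mod ?m) \<noteq> (if t div ?m = 0 then False else b ! (t div ?m - 1)))"
    using nth_phi[of a "t-1" b VB] ne assms by (simp add: compose_phi)
  also have "\<dots> = (ext a t \<noteq> ext b (t div ?m))"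
  proof -
    have "ext a t = a ! ((t-1) mod ?m)"
    proof -
      have "t + ?m - 1 = (t - 1) + 1 * ?m" using assms by simp
      then show ?thesis unfolding ext_def by (metis mod_mult_self1)
    qed
    moreover have "ext b (t div ?m) = (if t div ?m = 0 then False else b ! (t div ?m - 1))"
    proof (cases "t div ?m = 0")
      case True then show ?thesis using ne by (simp add: ext_0)
    next
      case False
      have "t div ?m \<le> ?n" using assms(4) by (metis div_le_mono mult.commute nonzero_mult_div_cancel_left not_one_le_zero ne(1) length_0_conv mult_eq_0_iff le_0_eq nat_le_linear div_mult_self1_is_m  assms(3)) 
      then show ?thesis using False by (simp add: ext_nth)
    qed
    ultimately show ?thesis by simp
  qed
  finally show ?thesis .
qed

lemma ext_compose:
  assumes "good a" "good b"
  shows "ext (compose a b) t = (ext a t \<noteq> ext b (t div length a))"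
proof (induction t rule: less_induct)
  case (less t)
  let ?m = "length a" and ?n = "length b" and ?w = "compose a b"
  have m: "?m \<ge> 2" "?n \<ge> 2" using good_len assms by auto
  have ne: "a \<noteq> []" "b \<noteq> []" "b ! 0" using assms unfolding good_def by auto
  have lw: "length ?w = ?m * ?n" using ne by (simp add: length_compose)
  have per: "(ext a (s + ?m * ?n) \<noteq> ext b ((s + ?m * ?n) div ?m)) = (ext a s \<noteq> ext b (s div ?m))" for s
  proof -
    have "ext a (s + ?m * ?n) = ext a s" using ext_period[of a s ?n] by (simp add: mult.commute)
    moreover have "(s + ?m * ?n) div ?m = s div ?m + 1 * ?n" using ne by simp
    ultimately show ?thesis by (simp only: ext_period)
  qed
  have wper: "ext ?w (s + ?m * ?n) = ext ?w s" for s using ext_period[of ?w s 1] lw by simp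
  show ?case
  proof (cases "1 \<le> t \<and> t \<le> ?m * ?n")
    case True then show ?thesis using ext_compose_aux assms by blast
  next
    case False
    show ?thesis
    proof (cases "t = 0")
      case True
      have "1 \<le> ?m * ?n" using mult_le_mono[of 1 ?m 1 ?n] m by simp
      then have "ext ?w (0 + ?m * ?n) = (ext a (0 + ?m * ?n) \<noteq> ext b ((0 + ?m * ?n) div ?m))"
        using ext_compose_aux assms by simp
      then show ?thesis using True per[of 0] wper[of 0] by simp
    next
      case f2: False
      then have "t > ?m * ?n" using False by auto
      then obtain s where s: "t = s + ?m * ?n" "s < t" using m
      proof -
        have "t = (t - ?m * ?n) + ?m * ?n" "t - ?m * ?n < t" using \<open>t > ?m * ?n\<close> m ne by auto
        then show ?thesis using that by blast
      qed
      show ?thesis using less.IH[OF s(2)] s(1) per[of s] wper[of s] by simp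
    qed
  qed
qed

lemma good_compose:
  assumes "good a" "good b"
  shows "good (compose a b)"
proof -
  let ?m = "length a" and ?n = "length b" and ?w = "compose a b"
  have m: "?m \<ge> 2" "?n \<ge> 2" using good_len assms by auto
  have ne: "a \<noteq> []" "b \<noteq> []" "b ! 0" "a ! 0" "\<not> a ! (?m - 1)" "\<not> b ! (?n - 1)" using assms unfolding good_def by auto
  have lw: "length ?w = ?m * ?n" using ne by (simp add: length_compose)
  have N: "?m * ?n \<ge> 1" using mult_le_mono[of 1 ?m 1 ?n] m by simp
  have "?w ! 0 = ext ?w 1" using N lw by (simp add: ext_nth)
  also have "\<dots> = (ext a 1 \<noteq> ext b (1 div ?m))" using ext_compose assms by blast
  also have "\<dots>" using m ne by (simp add: ext_nth ext_0)
  finally have 1: "?w ! 0" .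
  have "?w ! (length ?w - 1) = ext ?w (?m * ?n)" using N lw by (simp add: ext_nth)
  also have "\<dots> = (ext a (0 + ?n * ?m) \<noteq> ext b (0 + 1 * ?n))" using ext_compose[OF assms] m ne by (simp add: mult.commute)
  also have "\<dots> = (ext a 0 \<noteq> ext b 0)" by (simp only: ext_period)
  also have "\<not> \<dots>" using ne by (simp add: ext_0)
  finally have 2: "\<not> ?w ! (length ?w - 1)" .
  show ?thesis using 1 2 lw m ne unfolding good_def by auto
qed

lemma compose_assoc:
  assumes "good a" "good b" "good c"
  shows "compose (compose a b) c = compose a (compose b c)"
proof -
  let ?m = "length a" and ?n = "length b" and ?k = "length c"
  have gab: "good (compose a b)" and gbc: "good (compose b c)" using good_compose assms by auto
  have ne: "a \<noteq> []" "b \<noteq> []" "c \<noteq> []" "b ! 0" "c ! 0" using assms unfolding good_def by auto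
  have lab: "length (compose a b) = ?m * ?n" and lbc: "length (compose b c) = ?n * ?k" using ne by (auto simp: length_compose)
  have nab: "compose a b \<noteq> []" "compose a b ! 0" "compose b c \<noteq> []" "compose b c ! 0" using gab gbc unfolding good_def by auto
  have l1: "length (compose (compose a b) c) = ?m * ?n * ?k" using nab ne lab by (simp add: length_compose)
  have l2: "length (compose a (compose b c)) = ?m * ?n * ?k" using nab ne lbc by (simp add: length_compose)
  have e: "ext (compose (compose a b) c) t = ext (compose a (compose b c)) t" for t
    using ext_compose[OF gab assms(3)] ext_compose[OF assms(1) gbc] ext_compose[OF assms(1,2)] ext_compose[OF assms(2,3)] lab
    apply (simp add: div_mult2_eq) by blast
  show ?thesis
  proof (rule nth_equalityI)
    show "length (compose (compose a b) c) = length (compose a (compose b c))" using l1 l2 by simp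
    fix i assume "i < length (compose (compose a b) c)"
    then show "compose (compose a b) c ! i = compose a (compose b c) ! i"
      using e[of "i+1"] l1 l2 by (simp add: ext_nth)
  qed
qed

definition LTc :: "(nat \<Rightarrow> bool) \<Rightarrow> nat \<Rightarrow> nat \<Rightarrow> bool" where
  "LTc F i L \<longleftrightarrow> (\<exists>k<L. (\<forall>j<k. F (i+j+1) = F (j+1)) \<and> \<not> F (i+k+1) \<and> F (k+1))"

definition GEc :: "(nat \<Rightarrow> bool) \<Rightarrow> nat \<Rightarrow> nat \<Rightarrow> bool" where
  "GEc F i L \<longleftrightarrow> (\<forall>j<L. F (i+j+1) = (\<not> F (j+1))) \<or>
      (\<exists>k<L. (\<forall>j<k. F (i+j+1) = (\<not> F (j+1))) \<and> F (i+k+1) \<and> F (k+1))"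

lemma word_less_eq:
  assumes "length c = length d"
  shows "word_less c d \<longleftrightarrow> (\<exists>k<length c. (\<forall>j<k. c!j = d!j) \<and> \<not> c!k \<and> d!k)"
proof
  assume "word_less c d"
  then obtain k where k: "\<forall>i<k. pad c i = pad d i" "\<not> pad c k" "pad d k" unfolding word_less_def by blast
  have kl: "k < length c" using k(3) assms unfolding pad_def by (auto split: if_splits)
  show "\<exists>k<length c. (\<forall>j<k. c!j = d!j) \<and> \<not> c!k \<and> d!k"
    using k kl assms unfolding pad_def by (intro exI[of _ k]) auto
next
  assume "\<exists>k<length c. (\<forall>j<k. c!j = d!j) \<and> \<not> c!k \<and> d!k"
  then obtain k where k: "k < length c" "\<forall>j<k. c!j = d!j" "\<not> c!k" "d!k" by blast
  show "word_less c d" unfolding word_less_def pad_def using k assms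
    by (intro exI[of _ k]) auto
qed

lemma pad_eq:
  assumes "length c = length d"
  shows "pad c = pad d \<longleftrightarrow> (\<forall>j<length c. c!j = d!j)"
proof
  assume "pad c = pad d"
  then show "\<forall>j<length c. c!j = d!j" using assms unfolding pad_def by (metis (full_types))
next
  assume "\<forall>j<length c. c!j = d!j"
  then show "pad c = pad d" using assms unfolding pad_def by auto
qed

lemma ex_bcong: "(\<And>k. k < L \<Longrightarrow> P k = Q k) \<Longrightarrow> (\<exists>k<L. P k) = (\<exists>k<L. Q k)"
  by auto

lemma all_bcong: "(\<And>k. k < L \<Longrightarrow> P k = Q k) \<Longrightarrow> (\<forall>k<L. P k) = (\<forall>k<L. Q k)"
  by auto

lemma fund_iff:
  "fundamental w \<longleftrightarrow> length w \<ge> 2 \<and>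
     (\<forall>i. 1 \<le> i \<and> i < length w \<longrightarrow> LTc (ext w) i (length w - i) \<and> GEc (ext w) i (length w - i))"
proof -
  have key: "(word_le (refl_word (take (length w - i) w)) (drop i w) \<and>
        word_less (drop i w) (take (length w - i) w)) \<longleftrightarrow>
        (LTc (ext w) i (length w - i) \<and> GEc (ext w) i (length w - i))"
    if i: "1 \<le> i" "i < length w" for i
  proof -
    let ?L = "length w - i"
    have S: "j < ?L \<Longrightarrow> drop i w ! j = ext w (i+j+1)" for j using i by (simp add: ext_nth)
    have P: "j < ?L \<Longrightarrow> take ?L w ! j = ext w (j+1)" for j using i by (simp add: ext_nth)
    have R: "j < ?L \<Longrightarrow> refl_word (take ?L w) ! j = (\<not> ext w (j+1))" for j using i by (simp add: ext_nth refl_word_def)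
    have S': "j < ?L \<Longrightarrow> ext w (Suc (i+j)) = w ! (i+j)" for j using i by (simp add: ext_nth)
    have P': "j < ?L \<Longrightarrow> ext w (Suc j) = w ! j" for j using i by (simp add: ext_nth)
    have l: "length (drop i w) = ?L" "length (take ?L w) = ?L" "length (refl_word (take ?L w)) = ?L"
      using i by (auto simp: refl_word_def)
    have e1: "length (drop i w) = length (take ?L w)" "length (refl_word (take ?L w)) = length (drop i w)"
      using i by (auto simp: refl_word_def)
    have A: "word_less (drop i w) (take ?L w) \<longleftrightarrow> LTc (ext w) i ?L"
      unfolding word_less_eq[OF e1(1)] LTc_def l(1)
      by (intro ex_bcong conj_cong all_bcong refl) (auto simp: S' P' refl_word_def)
    have B1: "word_less (refl_word (take ?L w)) (drop i w) \<longleftrightarrow>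
       (\<exists>k<?L. (\<forall>j<k. ext w (i+j+1) = (\<not> ext w (j+1))) \<and> ext w (k+1) \<and> ext w (i+k+1))"
      unfolding word_less_eq[OF e1(2)] l(3)
      by (intro ex_bcong conj_cong all_bcong refl) (auto simp: S' P' refl_word_def)
    have B2: "pad (refl_word (take ?L w)) = pad (drop i w) \<longleftrightarrow> (\<forall>j<?L. ext w (i+j+1) = (\<not> ext w (j+1)))"
      unfolding pad_eq[OF e1(2)] l(3)
      by (intro all_bcong) (auto simp: S' P' refl_word_def)
    show ?thesis unfolding word_le_def GEc_def using A B1 B2 by blast
  qed
  show ?thesis unfolding fundamental_def using key by blast
qed

context
  fixes a b :: word and F :: "nat \<Rightarrow> bool" and m n :: nat
  assumes ga: "good a" and gb: "good b"
    and fa: "\<And>r. 1 \<le> r \<Longrightarrow> r < m \<Longrightarrow> LTc (ext a) r (m-r) \<and> GEc (ext a) r (m-r)"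
    and fb: "\<And>q. 1 \<le> q \<Longrightarrow> q < n \<Longrightarrow> LTc (ext b) q (n-q) \<and> GEc (ext b) q (n-q)"
    and m_def: "m = length a" and n_def: "n = length b"
    and F_def: "\<And>t. F t = (ext a t \<noteq> ext b (t div m))"
begin

lemma m2: "m \<ge> 2" and n2: "n \<ge> 2"
  using good_len ga gb m_def n_def by auto

lemma FG: "F (q*m + x) = (ext a x \<noteq> ext b (q + x div m))"
proof -
  have "ext a (q*m + x) = ext a x" using ext_period[of a x q] m_def by (simp add: add.commute)
  moreover have "(q*m + x) div m = q + x div m" using m2 by simp
  ultimately show ?thesis using F_def by simp
qed

lemma ea0: "\<not> ext a 0" and eam: "\<not> ext a m" and ea1: "ext a 1"
  and eb0: "\<not> ext b 0" and ebn: "\<not> ext b n" and eb1: "ext b 1"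
proof -
  show "\<not> ext a 0" using ga unfolding good_def by (simp add: ext_0)
  show "\<not> ext b 0" using gb unfolding good_def by (simp add: ext_0)
  show "\<not> ext a m" using ga m2 m_def unfolding good_def by (simp add: ext_nth)
  show "\<not> ext b n" using gb n2 n_def unfolding good_def by (simp add: ext_nth)
  show "ext a 1" using ga m2 m_def unfolding good_def by (simp add: ext_nth)
  show "ext b 1" using gb n2 n_def unfolding good_def by (simp add: ext_nth)
qed


lemma S1: "r < m \<Longrightarrow> j < m - r - 1 \<Longrightarrow> F (q*m + r + j + 1) = (ext a (r+j+1) \<noteq> ext b q)"
proof -
  assume h: "r < m" "j < m - r - 1"
  have e: "q*m + r + j + 1 = q*m + (r+j+1)" by simp
  have d: "(r+j+1) div m = 0" using h by simp
  have "F (q*m + r + j + 1) = F (q*m + (r+j+1))" by (simp only: e)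
  also have "\<dots> = (ext a (r+j+1) \<noteq> ext b (q + (r+j+1) div m))" by (rule FG)
  finally show ?thesis by (simp only: d add_0_right)
qed

lemma S2: "r < m \<Longrightarrow> F (q*m + r + (m-r-1) + 1) = ext b (q+1)"
proof -
  assume h: "r < m"
  have e: "q*m + r + (m-r-1) + 1 = (q+1)*m + 0" using h by simp
  have "F (q*m + r + (m-r-1) + 1) = F ((q+1)*m + 0)" by (simp only: e)
  also have "\<dots> = (ext a 0 \<noteq> ext b (q + 1 + 0 div m))" by (rule FG)
  finally show ?thesis using ea0 by simp
qed

lemma S3: "r < m \<Longrightarrow> m - r \<le> j \<Longrightarrow> j < m \<Longrightarrow>
    F (q*m + r + j + 1) = (ext a (j-(m-r)+1) \<noteq> ext b (q+1))"
proof -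
  assume h: "r < m" "m - r \<le> j" "j < m"
  have e: "q*m + r + j + 1 = (q+1)*m + (j-(m-r)+1)" using h by simp
  have d: "(j-(m-r)+1) div m = 0" using h by simp
  have "F (q*m + r + j + 1) = F ((q+1)*m + (j-(m-r)+1))" by (simp only: e)
  also have "\<dots> = (ext a (j-(m-r)+1) \<noteq> ext b (q + 1 + (j-(m-r)+1) div m))" by (rule FG)
  finally show ?thesis by (simp only: d add_0_right)
qed

lemma P1: "j < m - 1 \<Longrightarrow> F (j+1) = ext a (j+1)"
proof -
  assume h: "j < m - 1"
  have "(j+1) div m = 0" using h by simp
  then show ?thesis using FG[of 0 "j+1"] eb0 by simp
qed

lemma P2: "F m"
  using FG[of 1 0] ea0 eb1 by simp

lemma tailLT:
  assumes r: "1 \<le> r" "r < m" and q: "q < n"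
    and agree: "\<forall>j<m-r. F (q*m+r+j+1) = F (j+1)" and Q1: "ext b (q+1)"
  shows "LTc F (q*m+r) (m*n - (q*m+r))"
proof -
  have q1: "q + 2 \<le> n" using Q1 ebn q by (cases "q+1 = n") auto
  have "(q+2)*m \<le> n*m" using q1 by (rule mult_le_mono1)
  then have L: "m - 1 < m*n - (q*m+r)" using r by (simp add: algebra_simps)
  have g: "GEc (ext a) (m-r) (m-(m-r))" using fa[of "m-r"] r by simp
  have mr: "m - (m-r) = r" using r by simp
  have Fm: "F (m - 1 + 1) = True" using P2 m2 by simp
  show ?thesis
  proof (cases "\<forall>t<r. ext a (m-r+t+1) = (\<not> ext a (t+1))")
    case True
    have h: "r - 1 < r" using r by simp
    have "ext a (m-r+(r-1)+1) = (\<not> ext a (r-1+1))" using True[rule_format, OF h] .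
    moreover have "m-r+(r-1)+1 = m" "r-1+1 = r" using r by auto
    ultimately have ar: "ext a r" using eam by simp
    show ?thesis unfolding LTc_def
    proof (intro exI[of _ "m-1"] conjI allI impI)
      show "m - 1 < m*n - (q*m+r)" by (rule L)
      show "F (m - 1 + 1)" using Fm by simp
      have "F (q*m + r + (m-1) + 1) = (ext a (m-1-(m-r)+1) \<noteq> ext b (q+1))" by (rule S3) (use r in auto)
      then show "\<not> F (q*m + r + (m-1) + 1)" using Q1 ar r by simp
      fix j assume j: "j < m - 1"
      show "F (q*m + r + j + 1) = F (j+1)"
      proof (cases "j < m - r")
        case True then show ?thesis using agree by simp
      next
        case False
        have "F (q*m + r + j + 1) = (ext a (j-(m-r)+1) \<noteq> ext b (q+1))" by (rule S3) (use r False j in auto)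
        moreover have "F (j+1) = ext a (j+1)" using P1 j by simp
        moreover have "ext a (m-r+(j-(m-r))+1) = (\<not> ext a (j-(m-r)+1))"
        proof -
          have ht: "j-(m-r) < r" using j False by simp
          show ?thesis using True[rule_format, OF ht] .
        qed
        moreover have "m-r+(j-(m-r)) = j" using False by simp
        ultimately show ?thesis using Q1 by simp
      qed
    qed
  next
    case False
    then obtain k where k: "k < r" "\<forall>t<k. ext a (m-r+t+1) = (\<not> ext a (t+1))"
      "ext a (m-r+k+1)" "ext a (k+1)"
      using g mr unfolding GEc_def by auto
    have kr: "k < r - 1"
    proof (rule ccontr)
      assume "\<not> k < r - 1"
      then have "m-r+k+1 = m" using k(1) r by simp
      then show False using k(3) eam by simp
    qed
    show ?thesis unfolding LTc_def
    proof (intro exI[of _ "m-r+k"] conjI allI impI)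
      show "m - r + k < m*n - (q*m+r)" using L kr r by linarith
      have "F (m - r + k + 1) = ext a (m-r+k+1)" using P1 kr r by simp
      then show "F (m - r + k + 1)" using k(3) by simp
      have "F (q*m + r + (m-r+k) + 1) = (ext a ((m-r+k)-(m-r)+1) \<noteq> ext b (q+1))" by (rule S3) (use r kr in auto)
      then show "\<not> F (q*m + r + (m-r+k) + 1)" using Q1 k(4) by simp
      fix j assume j: "j < m - r + k"
      show "F (q*m + r + j + 1) = F (j+1)"
      proof (cases "j < m - r")
        case True then show ?thesis using agree by simp
      next
        case False
        have "F (q*m + r + j + 1) = (ext a (j-(m-r)+1) \<noteq> ext b (q+1))" by (rule S3) (use r False j kr in auto)
        moreover have "F (j+1) = ext a (j+1)" using P1 j kr r by simp
        moreover have "ext a (m-r+(j-(m-r))+1) = (\<not> ext a (j-(m-r)+1))"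
        proof -
          have ht: "j-(m-r) < k" using j False by simp
          show ?thesis using k(2)[rule_format, OF ht] .
        qed
        moreover have "m-r+(j-(m-r)) = j" using False by simp
        ultimately show ?thesis using Q1 by simp
      qed
    qed
  qed
qed


lemma tailGE:
  assumes r: "1 \<le> r" "r < m" and q: "q < n"
    and agree: "\<forall>j<m-r. F (q*m+r+j+1) = (\<not> F (j+1))" and Q1: "\<not> ext b (q+1)"
  shows "GEc F (q*m+r) (m*n - (q*m+r))"
proof (cases "q + 1 = n")
  case True
  then have "m*n = q*m + m" by (metis add.commute mult.commute mult_Suc_right plus_1_eq_Suc)
  then have "m*n - (q*m+r) = m - r" using r by simp
  then show ?thesis unfolding GEc_def using agree by simp
next
  case False
  have q1: "q + 2 \<le> n" using False q by simp
  have "(q+2)*m \<le> n*m" using q1 by (rule mult_le_mono1)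
  then have L: "m - 1 < m*n - (q*m+r)" using r by (simp add: algebra_simps)
  have g: "GEc (ext a) (m-r) (m-(m-r))" using fa[of "m-r"] r by simp
  have mr: "m - (m-r) = r" using r by simp
  have Fm: "F (m - 1 + 1) = True" using P2 m2 by simp
  show ?thesis
  proof (cases "\<forall>t<r. ext a (m-r+t+1) = (\<not> ext a (t+1))")
    case True
    have h: "r - 1 < r" using r by simp
    have "ext a (m-r+(r-1)+1) = (\<not> ext a (r-1+1))" using True[rule_format, OF h] .
    moreover have "m-r+(r-1)+1 = m" "r-1+1 = r" using r by auto
    ultimately have ar: "ext a r" using eam by simp
    show ?thesis unfolding GEc_def
    proof (intro disjI2 exI[of _ "m-1"] conjI allI impI)
      show "m - 1 < m*n - (q*m+r)" by (rule L)
      show "F (m - 1 + 1)" using Fm by simp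
      have "F (q*m + r + (m-1) + 1) = (ext a (m-1-(m-r)+1) \<noteq> ext b (q+1))" by (rule S3) (use r in auto)
      then show "F (q*m + r + (m-1) + 1)" using Q1 ar r by simp
      fix j assume j: "j < m - 1"
      show "F (q*m + r + j + 1) = (\<not> F (j+1))"
      proof (cases "j < m - r")
        case True then show ?thesis using agree by simp
      next
        case False
        have "F (q*m + r + j + 1) = (ext a (j-(m-r)+1) \<noteq> ext b (q+1))" by (rule S3) (use r False j in auto)
        moreover have "F (j+1) = ext a (j+1)" using P1 j by simp
        moreover have "ext a (m-r+(j-(m-r))+1) = (\<not> ext a (j-(m-r)+1))"
        proof -
          have ht: "j-(m-r) < r" using j False by simp
          show ?thesis using True[rule_format, OF ht] .
        qed
        moreover have "m-r+(j-(m-r)) = j" using False by simp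
        ultimately show ?thesis using Q1 by simp
      qed
    qed
  next
    case False
    then obtain k where k: "k < r" "\<forall>t<k. ext a (m-r+t+1) = (\<not> ext a (t+1))"
      "ext a (m-r+k+1)" "ext a (k+1)"
      using g mr unfolding GEc_def by auto
    have kr: "k < r - 1"
    proof (rule ccontr)
      assume "\<not> k < r - 1"
      then have "m-r+k+1 = m" using k(1) r by simp
      then show False using k(3) eam by simp
    qed
    show ?thesis unfolding GEc_def
    proof (intro disjI2 exI[of _ "m-r+k"] conjI allI impI)
      show "m - r + k < m*n - (q*m+r)" using L kr r by linarith
      have "F (m - r + k + 1) = ext a (m-r+k+1)" using P1 kr r by simp
      then show "F (m - r + k + 1)" using k(3) by simp
      have "F (q*m + r + (m-r+k) + 1) = (ext a ((m-r+k)-(m-r)+1) \<noteq> ext b (q+1))" by (rule S3) (use r kr in auto)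
      then show "F (q*m + r + (m-r+k) + 1)" using Q1 k(4) by simp
      fix j assume j: "j < m - r + k"
      show "F (q*m + r + j + 1) = (\<not> F (j+1))"
      proof (cases "j < m - r")
        case True then show ?thesis using agree by simp
      next
        case False
        have "F (q*m + r + j + 1) = (ext a (j-(m-r)+1) \<noteq> ext b (q+1))" by (rule S3) (use r False j kr in auto)
        moreover have "F (j+1) = ext a (j+1)" using P1 j kr r by simp
        moreover have "ext a (m-r+(j-(m-r))+1) = (\<not> ext a (j-(m-r)+1))"
        proof -
          have ht: "j-(m-r) < k" using j False by simp
          show ?thesis using k(2)[rule_format, OF ht] .
        qed
        moreover have "m-r+(j-(m-r)) = j" using False by simp
        ultimately show ?thesis using Q1 by simp
      qed
    qed
  qed
qed


lemma caseR:
  assumes r: "1 \<le> r" "r < m" and q: "q < n"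
  shows "LTc F (q*m+r) (m*n - (q*m+r)) \<and> GEc F (q*m+r) (m*n - (q*m+r))"
proof -
  let ?L = "m*n - (q*m+r)"
  have "(q+1)*m \<le> n*m" using q by (intro mult_le_mono1) simp
  then have L1: "m - r \<le> ?L" using r by (simp add: algebra_simps)
  have la: "LTc (ext a) r (m-r)" and ga': "GEc (ext a) r (m-r)" using fa r by auto
  have emr: "m - r - 1 + 1 = m - r" "r + (m-r-1) + 1 = m" using r by auto
  have Pk: "F (m-r-1+1) = ext a (m-r)"
  proof -
    have h: "m-r-1 < m-1" using r by simp
    have "F (m-r-1+1) = ext a (m-r-1+1)" by (rule P1[OF h])
    then show ?thesis by (simp only: emr(1))
  qed
  have S2': "F (q*m + r + (m-r-1) + 1) = ext b (q+1)" by (rule S2[OF r(2)])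
  have S1': "F (q*m + r + j + 1) = (ext a (r+j+1) \<noteq> ext b q)" if "j < m-r-1" for j by (rule S1[OF r(2) that])
  have P1': "F (j+1) = ext a (j+1)" if "j < m-r-1" for j using that by (intro P1) linarith
  have splitj: "j < m-r-1 \<or> j = m-r-1" if "j < m-r" for j using that by linarith
  show ?thesis
  proof (cases "ext b q")
    case False
    have LT: "LTc F (q*m+r) ?L"
    proof -
      obtain k where k: "k < m-r" "\<forall>j<k. ext a (r+j+1) = ext a (j+1)" "\<not> ext a (r+k+1)" "ext a (k+1)"
        using la unfolding LTc_def by blast
      have agr: "F (q*m+r+j+1) = F (j+1)" if "j < k" "j < m-r-1" for j
        using S1'[of j] P1'[of j] k(2) that False by simp
      show ?thesis
      proof (cases "k < m-r-1")
        case True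
        show ?thesis unfolding LTc_def
          by (intro exI[of _ k]) (use True k agr S1'[of k] P1'[of k] L1 False in auto)
      next
        case kF: False
        then have kk: "k = m-r-1" using k(1) by simp
        have amr: "ext a (m-r)" using k(4) kk emr by simp
        show ?thesis
        proof (cases "ext b (q+1)")
          case Q1: True
          have agr2: "\<forall>j<m-r. F (q*m+r+j+1) = F (j+1)"
            using agr kk S2' Pk amr Q1 splitj by auto
          show ?thesis by (rule tailLT[OF r q agr2 Q1])
        next
          case Q1: False
          show ?thesis unfolding LTc_def
            by (intro exI[of _ "m-r-1"]) (use agr kk S2' Pk amr Q1 L1 r in auto)
        qed
      qed
    qed
    have GE: "GEc F (q*m+r) ?L"
    proof (cases "\<forall>j<m-r. ext a (r+j+1) = (\<not> ext a (j+1))")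
      case True
      have h: "m-r-1 < m-r" using r by simp
      have "ext a (r+(m-r-1)+1) = (\<not> ext a (m-r-1+1))" using True[rule_format, OF h] .
      then have amr: "ext a (m-r)" using eam by (simp only: emr) simp
      have agr: "F (q*m+r+j+1) = (\<not> F (j+1))" if "j < m-r-1" for j
        using S1'[of j] P1'[of j] True that False by simp
      show ?thesis
      proof (cases "ext b (q+1)")
        case Q1: True
        show ?thesis unfolding GEc_def
          by (intro disjI2 exI[of _ "m-r-1"]) (use agr S2' Pk amr Q1 L1 r in auto)
      next
        case Q1: False
        have agr2: "\<forall>j<m-r. F (q*m+r+j+1) = (\<not> F (j+1))"
          using agr S2' Pk amr Q1 splitj by auto
        show ?thesis by (rule tailGE[OF r q agr2 Q1])
      qed
    next
      case nall: False
      obtain k where k: "k < m-r" "\<forall>j<k. ext a (r+j+1) = (\<not> ext a (j+1))" "ext a (r+k+1)" "ext a (k+1)"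
        using ga' nall unfolding GEc_def by blast
      have kr: "k < m-r-1"
      proof (rule ccontr)
        assume "\<not> k < m-r-1"
        then have "r+k+1 = m" using k(1) by simp
        then show False using k(3) eam by simp
      qed
      have agr: "F (q*m+r+j+1) = (\<not> F (j+1))" if "j < k" for j
        using S1'[of j] P1'[of j] k(2) that False kr by simp
      show ?thesis unfolding GEc_def
        by (intro disjI2 exI[of _ k]) (use agr kr k S1'[of k] P1'[of k] L1 False in auto)
    qed
    show ?thesis using LT GE by blast
  next
    case Q0: True
    have LT: "LTc F (q*m+r) ?L"
    proof (cases "\<forall>j<m-r. ext a (r+j+1) = (\<not> ext a (j+1))")
      case True
      have h: "m-r-1 < m-r" using r by simp
      have "ext a (r+(m-r-1)+1) = (\<not> ext a (m-r-1+1))" using True[rule_format, OF h] .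
      then have amr: "ext a (m-r)" using eam by (simp only: emr) simp
      have agr: "F (q*m+r+j+1) = F (j+1)" if "j < m-r-1" for j
        using S1'[of j] P1'[of j] True that Q0 by simp
      show ?thesis
      proof (cases "ext b (q+1)")
        case Q1: True
        have agr2: "\<forall>j<m-r. F (q*m+r+j+1) = F (j+1)"
          using agr S2' Pk amr Q1 splitj by auto
        show ?thesis by (rule tailLT[OF r q agr2 Q1])
      next
        case Q1: False
        show ?thesis unfolding LTc_def
          by (intro exI[of _ "m-r-1"]) (use agr S2' Pk amr Q1 L1 r in auto)
      qed
    next
      case nall: False
      obtain k where k: "k < m-r" "\<forall>j<k. ext a (r+j+1) = (\<not> ext a (j+1))" "ext a (r+k+1)" "ext a (k+1)"
        using ga' nall unfolding GEc_def by blast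
      have kr: "k < m-r-1"
      proof (rule ccontr)
        assume "\<not> k < m-r-1"
        then have "r+k+1 = m" using k(1) by simp
        then show False using k(3) eam by simp
      qed
      have agr: "F (q*m+r+j+1) = F (j+1)" if "j < k" for j
        using S1'[of j] P1'[of j] k(2) that Q0 kr by simp
      show ?thesis unfolding LTc_def
        by (intro exI[of _ k]) (use agr kr k S1'[of k] P1'[of k] L1 Q0 in auto)
    qed
    have GE: "GEc F (q*m+r) ?L"
    proof -
      obtain k where k: "k < m-r" "\<forall>j<k. ext a (r+j+1) = ext a (j+1)" "\<not> ext a (r+k+1)" "ext a (k+1)"
        using la unfolding LTc_def by blast
      have agr: "F (q*m+r+j+1) = (\<not> F (j+1))" if "j < k" "j < m-r-1" for j
        using S1'[of j] P1'[of j] k(2) that Q0 by simp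
      show ?thesis
      proof (cases "k < m-r-1")
        case True
        show ?thesis unfolding GEc_def
          by (intro disjI2 exI[of _ k]) (use True k agr S1'[of k] P1'[of k] L1 Q0 in auto)
      next
        case kF: False
        then have kk: "k = m-r-1" using k(1) by simp
        have amr: "ext a (m-r)" using k(4) kk emr by simp
        show ?thesis
        proof (cases "ext b (q+1)")
          case Q1: False
          have agr2: "\<forall>j<m-r. F (q*m+r+j+1) = (\<not> F (j+1))"
            using agr kk S2' Pk amr Q1 splitj by auto
          show ?thesis by (rule tailGE[OF r q agr2 Q1])
        next
          case Q1: True
          show ?thesis unfolding GEc_def
            by (intro disjI2 exI[of _ "m-r-1"]) (use agr kk S2' Pk amr Q1 L1 r in auto)
        qed
      qed
    qed
    show ?thesis using LT GE by blast
  qed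
qed


lemma SP0: "F (q*m + j + 1) = (F (j+1) \<noteq> (ext b (q + (j+1) div m) \<noteq> ext b ((j+1) div m)))"
proof -
  have "F (q*m + j + 1) = F (q*m + (j+1))" by (simp only: add.assoc)
  also have "\<dots> = (ext a (j+1) \<noteq> ext b (q + (j+1) div m))" by (rule FG)
  finally have 1: "F (q*m + j + 1) = (ext a (j+1) \<noteq> ext b (q + (j+1) div m))" .
  have "F (j+1) = F (0*m + (j+1))" by simp
  also have "\<dots> = (ext a (j+1) \<noteq> ext b (0 + (j+1) div m))" by (rule FG)
  finally have 2: "F (j+1) = (ext a (j+1) \<noteq> ext b ((j+1) div m))" by simp
  show ?thesis using 1 2 by blast
qed

lemma Pend: "F ((k+1)*m - 1 + 1) = ext b (k+1)"
proof -
  have "(k+1)*m - 1 + 1 = (k+1)*m + 0" using m2 by simp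
  then have "F ((k+1)*m - 1 + 1) = F ((k+1)*m + 0)" by (simp only:)
  also have "\<dots> = (ext a 0 \<noteq> ext b (k + 1 + 0 div m))" by (rule FG)
  finally show ?thesis using ea0 by simp
qed

lemma udiv: "(((k+1)*m - 1) + 1) div m = k + 1"
proof -
  have "(k+1)*m - 1 + 1 = (k+1)*m" using m2 by simp
  then show ?thesis using m2 by simp
qed

lemma ubound: "j < (k+1)*m - 1 \<Longrightarrow> (j+1) div m \<le> k"
proof -
  assume "j < (k+1)*m - 1"
  then have "j + 1 < (k+1)*m" by simp
  then have "(j+1) div m < k+1" using m2 by (simp add: div_less_iff_less_mult)
  then show ?thesis by simp
qed

lemma case0:
  assumes q: "1 \<le> q" "q < n"
  shows "LTc F (q*m) (m*n - q*m) \<and> GEc F (q*m) (m*n - q*m)"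
proof -
  let ?L = "m*n - q*m"
  have lb: "LTc (ext b) q (n-q)" and gb': "GEc (ext b) q (n-q)" using fb q by auto
  have F1: "F (0+1)" using FG[of 0 1] ea1 eb0 m2 by simp
  have Lk: "(k+1)*m - 1 < ?L" if "k < n - q" for k
  proof -
    have "(k+1)*m \<le> (n-q)*m" using that by (intro mult_le_mono1) simp
    moreover have "(n-q)*m = m*n - q*m" by (simp add: diff_mult_distrib2 mult.commute)
    ultimately have "(k+1)*m \<le> m*n - q*m" by simp
    moreover have "m \<le> (k+1)*m" by simp
    ultimately show ?thesis using m2 by linarith
  qed
  have L0: "0 < ?L"
  proof -
    have "(q+1)*m \<le> n*m" using q by (intro mult_le_mono1) simp
    then show ?thesis using m2 q by (simp add: algebra_simps)
  qed
  have S0: "F (q*m + 0 + 1) = (F (0+1) \<noteq> (ext b q \<noteq> ext b 0))" using SP0[of q 0] m2 by simp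
  show ?thesis
  proof (cases "ext b q")
    case Q0: True
    have LT: "LTc F (q*m) ?L" unfolding LTc_def
      by (intro exI[of _ 0]) (use L0 S0 F1 Q0 eb0 in auto)
    have GE: "GEc F (q*m) ?L"
    proof (cases "\<forall>j<n-q. ext b (q+j+1) = (\<not> ext b (j+1))")
      case True
      show ?thesis unfolding GEc_def
      proof (intro disjI1 allI impI)
        fix j assume j: "j < ?L"
        let ?u = "(j+1) div m"
        have "(n-q)*m = m*n - q*m" by (simp add: diff_mult_distrib2 mult.commute)
        then have "j + 1 \<le> (n-q)*m" using j by simp
        then have "?u \<le> ((n-q)*m) div m" by (rule div_le_mono)
        then have "?u \<le> n - q" using m2 by simp
        have "ext b (q + ?u) = (\<not> ext b ?u)"
        proof (cases "?u = 0")
          case True then show ?thesis using Q0 eb0 by simp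
        next
          case False
          then have h: "?u - 1 < n - q" using \<open>?u \<le> n - q\<close> by simp
          have "ext b (q + (?u-1) + 1) = (\<not> ext b (?u - 1 + 1))" using True[rule_format, OF h] .
          then show ?thesis using False by simp
        qed
        then show "F (q*m + j + 1) = (\<not> F (j+1))" using SP0[of q j] by simp
      qed
    next
      case nall: False
      obtain k where k: "k < n-q" "\<forall>j<k. ext b (q+j+1) = (\<not> ext b (j+1))" "ext b (q+k+1)" "ext b (k+1)"
        using gb' nall unfolding GEc_def by blast
      show ?thesis unfolding GEc_def
      proof (intro disjI2 exI[of _ "(k+1)*m - 1"] conjI allI impI)
        show "(k+1)*m - 1 < ?L" using Lk k(1) by simp
        show "F ((k+1)*m - 1 + 1)" using Pend k(4) by simp
        show "F (q*m + ((k+1)*m - 1) + 1)" using SP0[of q "(k+1)*m - 1"] udiv Pend k(3,4) by simp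
        fix j assume j: "j < (k+1)*m - 1"
        let ?u = "(j+1) div m"
        have u: "?u \<le> k" using ubound j by simp
        have "ext b (q + ?u) = (\<not> ext b ?u)"
        proof (cases "?u = 0")
          case True then show ?thesis using Q0 eb0 by simp
        next
          case False
          then have h: "?u - 1 < k" using u by simp
          have "ext b (q + (?u-1) + 1) = (\<not> ext b (?u - 1 + 1))" using k(2)[rule_format, OF h] .
          then show ?thesis using False by simp
        qed
        then show "F (q*m + j + 1) = (\<not> F (j+1))" using SP0[of q j] by simp
      qed
    qed
    show ?thesis using LT GE by blast
  next
    case Q0: False
    have GE: "GEc F (q*m) ?L" unfolding GEc_def
      by (intro disjI2 exI[of _ 0]) (use L0 S0 F1 Q0 eb0 in auto)
    obtain k where k: "k < n-q" "\<forall>j<k. ext b (q+j+1) = ext b (j+1)" "\<not> ext b (q+k+1)" "ext b (k+1)"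
      using lb unfolding LTc_def by blast
    have LT: "LTc F (q*m) ?L" unfolding LTc_def
    proof (intro exI[of _ "(k+1)*m - 1"] conjI allI impI)
      show "(k+1)*m - 1 < ?L" using Lk k(1) by simp
      show "F ((k+1)*m - 1 + 1)" using Pend k(4) by simp
      show "\<not> F (q*m + ((k+1)*m - 1) + 1)" using SP0[of q "(k+1)*m - 1"] udiv Pend k(3,4) by simp
      fix j assume j: "j < (k+1)*m - 1"
      let ?u = "(j+1) div m"
      have u: "?u \<le> k" using ubound j by simp
      have "ext b (q + ?u) = ext b ?u"
      proof (cases "?u = 0")
        case True then show ?thesis using Q0 eb0 by simp
      next
        case False
        then have h: "?u - 1 < k" using u by simp
        have "ext b (q + (?u-1) + 1) = ext b (?u - 1 + 1)" using k(2)[rule_format, OF h] .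
        then show ?thesis using False by simp
      qed
      then show "F (q*m + j + 1) = F (j+1)" using SP0[of q j] by simp
    qed
    show ?thesis using LT GE by blast
  qed
qed

end

lemma fund_good:
  assumes f: "fundamental a"
  shows "good a"
proof -
  let ?m = "length a"
  have m: "?m \<ge> 2" and all: "\<forall>i. 1 \<le> i \<and> i < ?m \<longrightarrow> LTc (ext a) i (?m-i) \<and> GEc (ext a) i (?m-i)"
    using f unfolding fund_iff by auto
  have "1 \<le> ?m-1 \<and> ?m-1 < ?m" using m by linarith
  then have h: "LTc (ext a) (?m-1) (?m - (?m-1))" using all by blast
  have one: "?m - (?m - 1) = 1" using m by simp
  obtain k where k: "k < 1" "\<not> ext a (?m-1+k+1)" "ext a (k+1)" using h unfolding LTc_def one by blast
  have k0: "k = 0" using k(1) by simp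
  have e: "?m-1+k+1 = ?m" using m k0 by simp
  have x1: "\<not> ext a ?m" using k(2) e by metis
  have x2: "ext a 1" using k(3) k0 by simp
  show "good a" unfolding good_def using m x1 x2 by (auto simp: ext_nth)
qed

lemma closure:
  assumes fa: "fundamental a" and fb: "fundamental b"
  shows "fundamental (compose a b)"
proof -
  let ?w = "compose a b" and ?m = "length a" and ?n = "length b"
  have ga: "good a" and gb: "good b" using fa fb fund_good by auto
  have m: "?m \<ge> 2" "?n \<ge> 2" using ga gb good_len by auto
  have ne: "a \<noteq> []" "b \<noteq> []" "b ! 0" using ga gb unfolding good_def by auto
  have lw: "length ?w = ?m * ?n" using ne by (simp add: length_compose)
  have fa': "\<And>r. 1 \<le> r \<Longrightarrow> r < ?m \<Longrightarrow> LTc (ext a) r (?m-r) \<and> GEc (ext a) r (?m-r)"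
    using fa unfolding fund_iff by blast
  have fb': "\<And>q. 1 \<le> q \<Longrightarrow> q < ?n \<Longrightarrow> LTc (ext b) q (?n-q) \<and> GEc (ext b) q (?n-q)"
    using fb unfolding fund_iff by blast
  have Fd: "\<And>t. ext ?w t = (ext a t \<noteq> ext b (t div ?m))" using ext_compose[OF ga gb] by blast
  have "2 * 2 \<le> ?m * ?n" using m by (intro mult_le_mono) auto
  then have l2: "length ?w \<ge> 2" using lw by simp
  show ?thesis unfolding fund_iff lw
  proof (rule conjI, use l2 lw in simp, intro allI impI)
    fix i assume i: "1 \<le> i \<and> i < ?m * ?n"
    define q where "q = i div ?m"
    define r where "r = i mod ?m"
    have iq: "i = q * ?m + r" unfolding q_def r_def by simp
    have qn: "q < ?n" unfolding q_def using i by (intro less_mult_imp_div_less) (simp add: mult.commute)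
    have rm: "r < ?m" unfolding r_def using ne by simp
    show "LTc (ext ?w) i (?m * ?n - i) \<and> GEc (ext ?w) i (?m * ?n - i)"
    proof (cases "r = 0")
      case True
      then have q1: "1 \<le> q" using i iq by (cases q) auto
      have "i = q * ?m" using iq True by simp
      then show ?thesis using case0[OF ga gb fa' fb' refl refl Fd q1 qn] by simp
    next
      case False
      then have r1: "1 \<le> r" by simp
      show ?thesis using caseR[OF ga gb fa' fb' refl refl Fd r1 rm qn] iq by simp
    qed
  qed
qed

lemma e10: "ext [True, False] 1" "\<not> ext [True, False] 2" "ext [True, False] (Suc 0)" "\<not> ext [True, False] (Suc (Suc 0))"
  by (simp_all add: ext_nth)

lemma fund10: "fundamental [True, False]"
  unfolding fund_iff
proof (rule conjI, simp, intro allI impI)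
  fix i assume i: "1 \<le> i \<and> i < length [True, False]"
  then have i1: "i = 1" by simp
  have "LTc (ext [True, False]) 1 1" unfolding LTc_def
    by (intro exI[of _ 0]) (simp add: e10)
  moreover have "GEc (ext [True, False]) 1 1" unfolding GEc_def
    by (intro disjI1 allI impI) (simp add: e10)
  ultimately show "LTc (ext [True, False]) i (length [True, False] - i) \<and> GEc (ext [True, False]) i (length [True, False] - i)"
    using i1 by simp
qed

lemma e110: "ext [True, True, False] 1" "ext [True, True, False] 2" "\<not> ext [True, True, False] 3"
   "ext [True, True, False] (Suc 0)" "ext [True, True, False] (Suc (Suc 0))" "\<not> ext [True, True, False] (Suc (Suc (Suc 0)))"
  by (simp_all add: ext_nth)

lemma fund110: "fundamental [True, True, False]"
  unfolding fund_iff
proof (rule conjI, simp, intro allI impI)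
  fix i assume i: "1 \<le> i \<and> i < length [True, True, False]"
  then have i12: "i = 1 \<or> i = 2" by auto
  have f1: "LTc (ext [True, True, False]) 1 2" unfolding LTc_def
  proof (intro exI[of _ 1] conjI allI impI)
    fix j :: nat assume "j < 1" then have "j = 0" by simp
    then show "ext [True, True, False] (1 + j + 1) = ext [True, True, False] (j + 1)" using e110 by simp
  qed (use e110 in simp_all)
  have f2: "GEc (ext [True, True, False]) 1 2" unfolding GEc_def
    by (intro disjI2 exI[of _ 0]) (simp add: e110)
  have f3: "LTc (ext [True, True, False]) 2 1" unfolding LTc_def
    by (intro exI[of _ 0]) (simp add: e110)
  have f4: "GEc (ext [True, True, False]) 2 1" unfolding GEc_def
    by (intro disjI1 allI impI) (simp add: e110)
  have l: "length [True, True, False] - 1 = 2" "length [True, True, False] - 2 = 1" by simp_all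
  show "LTc (ext [True, True, False]) i (length [True, True, False] - i) \<and> GEc (ext [True, True, False]) i (length [True, True, False] - i)"
  proof (cases "i = 1")
    case True then show ?thesis using f1 f2 by (simp only: l)
  next
    case False then have "i = 2" using i12 by simp
    then show ?thesis using f3 f4 by (simp only: l)
  qed
qed

theorem proposition2p11:
  shows "(\<forall>a\<in>A1. \<forall>b\<in>A1. compose a b \<in> A1)
       \<and> (\<forall>a\<in>A1. \<forall>b\<in>A1. \<forall>c\<in>A1. compose (compose a b) c = compose a (compose b c))
       \<and> (\<exists>a\<in>A1. \<exists>b\<in>A1. compose a b \<noteq> compose b a)"
proof (intro conjI)
  show "\<forall>a\<in>A1. \<forall>b\<in>A1. compose a b \<in> A1"
  proof (intro ballI)
    fix a b assume "a \<in> A1" "b \<in> A1"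
    then show "compose a b \<in> A1" unfolding A1_def using closure by simp
  qed
  show "\<forall>a\<in>A1. \<forall>b\<in>A1. \<forall>c\<in>A1. compose (compose a b) c = compose a (compose b c)"
  proof (intro ballI)
    fix a b c assume "a \<in> A1" "b \<in> A1" "c \<in> A1"
    then have "good a" "good b" "good c" unfolding A1_def using fund_good by auto
    then show "compose (compose a b) c = compose a (compose b c)" by (rule compose_assoc)
  qed
  have "compose [True, False] [True, True, False] \<noteq> compose [True, True, False] [True, False]"
    by (simp add: compose_def plus_word_def refl_word_def)
  then show "\<exists>a\<in>A1. \<exists>b\<in>A1. compose a b \<noteq> compose b a"
  proof -
    have m1: "[True, False] \<in> A1" unfolding A1_def using fund10 by (rule CollectI)
    have m2: "[True, True, False] \<in> A1" unfolding A1_def using fund110 by (rule CollectI)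
    have "\<exists>b\<in>A1. compose [True, False] b \<noteq> compose b [True, False]"
      using \<open>compose [True, False] [True, True, False] \<noteq> compose [True, True, False] [True, False]\<close> m2 by blast
    then show ?thesis using m1 by blast
  qed
qed

end
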